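(* Let $U_1$ be a vector space over a field of characteristic zero, let $U_{0-}=\bigoplus_{p\geq1}U_{-p+1}$ with the bilinear operation $\circ$ defined below, and set $[\![A,B]\!]=A\circ B-B\circ A$ for $A,B\in U_{0-}$. Then $(U_{0-},[\![\cdot,\cdot]\!])$ is a Lie algebra.
   Context: Define vector spaces recursively by $U_{-p+1}=\mathrm{Hom}(U_1,U_{-p+2})$ for $p=1,2,\ldots$ (all linear maps). Elements of $U_{-p+1}$ are called operators of order $p$ (elements of $U_1$ have order $0$). For an operator $A$ of order $p\geq1$ and $x\in U_1$ set $A\circ x=A(x)$ and $x\circ A=0$. For operators $A,B$ of orders $p,q\geq1$, define $A\circ B\in U_{-(p+q-1)+1}$ recursively by $(A\circ B)(x)=A\circ B(x)+A(x)\circ B$ for all $x\in U_1$, and extend $\circ$ bilinearly to $U_{0-}$. *)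

theory Defs
  imports Complex_Main "HOL-Library.Function_Algebras"
begin

text \<open>An operator of order p, i.e. an element of U_{-p+1} = Hom(U_1, Hom(U_1, ... U_1)),
  is represented in uncurried form as a function on argument lists:
  A [x1,...,xp] stands for A(x1)(x2)...(xp).  Application to one argument is
  A(x) = (\<lambda>zs. A (x # zs)).  Elements of U_1 are the order-0 case.\<close>

definition multilinear_op ::
  "('a::field \<Rightarrow> 'v::ab_group_add \<Rightarrow> 'v) \<Rightarrow> nat \<Rightarrow> ('v list \<Rightarrow> 'v) \<Rightarrow> bool" where
  "multilinear_op sc p A \<longleftrightarrow>
     (\<forall>us vs. length us + 1 + length vs = p \<longrightarrow>
        Vector_Spaces.linear sc sc (\<lambda>x. A (us @ x # vs)))"

text \<open>The composition of operators of orders p and q (result of order p+q-1),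
  defined by (A o B)(x) = A o B(x) + A(x) o B, where for v in U_1 we have
  A o v = A(v) and v o B = 0.\<close>

fun opcomp :: "nat \<Rightarrow> nat \<Rightarrow> ('v::ab_group_add list \<Rightarrow> 'v) \<Rightarrow> ('v list \<Rightarrow> 'v) \<Rightarrow> 'v list \<Rightarrow> 'v" where
  "opcomp p q A B [] = 0"
| "opcomp p q A B (x # ys) =
     (if q \<le> 1 then A (B [x] # ys) else opcomp p (q - 1) A (\<lambda>zs. B (x # zs)) ys)
   + (if p \<le> 1 then 0 else opcomp (p - 1) q (\<lambda>zs. A (x # zs)) B ys)"

text \<open>U_{0-} = direct sum over p >= 1 of U_{-p+1}: a finitely supported family of
  operators, the component of order p being multilinear and vanishing on argument
  lists of length different from p.\<close>

definition U0m :: "('a::field \<Rightarrow> 'v::ab_group_add \<Rightarrow> 'v) \<Rightarrow> (nat \<Rightarrow> 'v list \<Rightarrow> 'v) set" where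
  "U0m sc = {A. A 0 = (\<lambda>_. 0)
              \<and> (\<forall>p xs. length xs \<noteq> p \<longrightarrow> A p xs = 0)
              \<and> (\<forall>p. multilinear_op sc p (A p))
              \<and> finite {p. A p \<noteq> (\<lambda>_. 0)}}"

definition circ :: "(nat \<Rightarrow> 'v::ab_group_add list \<Rightarrow> 'v) \<Rightarrow> (nat \<Rightarrow> 'v list \<Rightarrow> 'v) \<Rightarrow> nat \<Rightarrow> 'v list \<Rightarrow> 'v" where
  "circ A B r xs =
     (if r = 0 \<or> length xs \<noteq> r then 0
      else (\<Sum>p\<in>{1..r}. opcomp p (r + 1 - p) (A p) (B (r + 1 - p)) xs))"

definition bracket :: "(nat \<Rightarrow> 'v::ab_group_add list \<Rightarrow> 'v) \<Rightarrow> (nat \<Rightarrow> 'v list \<Rightarrow> 'v) \<Rightarrow> nat \<Rightarrow> 'v list \<Rightarrow> 'v" where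
  "bracket A B = circ A B - circ B A"

definition scale_U0m :: "('a \<Rightarrow> 'v \<Rightarrow> 'v) \<Rightarrow> 'a \<Rightarrow> (nat \<Rightarrow> 'v list \<Rightarrow> 'v) \<Rightarrow> nat \<Rightarrow> 'v list \<Rightarrow> 'v" where
  "scale_U0m sc c A = (\<lambda>p xs. sc c (A p xs))"

definition is_lie_algebra :: "('a::field \<Rightarrow> 'w::ab_group_add \<Rightarrow> 'w) \<Rightarrow> 'w set \<Rightarrow> ('w \<Rightarrow> 'w \<Rightarrow> 'w) \<Rightarrow> bool" where
  "is_lie_algebra sc S br \<longleftrightarrow>
     0 \<in> S \<and> (\<forall>x\<in>S. \<forall>y\<in>S. x + y \<in> S) \<and> (\<forall>c. \<forall>x\<in>S. sc c x \<in> S)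
   \<and> (\<forall>x\<in>S. \<forall>y\<in>S. br x y \<in> S)
   \<and> (\<forall>x\<in>S. \<forall>y\<in>S. \<forall>z\<in>S. br (x + y) z = br x z + br y z \<and> br z (x + y) = br z x + br z y)
   \<and> (\<forall>c. \<forall>x\<in>S. \<forall>y\<in>S. br (sc c x) y = sc c (br x y) \<and> br x (sc c y) = sc c (br x y))
   \<and> (\<forall>x\<in>S. br x x = 0)
   \<and> (\<forall>x\<in>S. \<forall>y\<in>S. \<forall>z\<in>S. br x (br y z) + br y (br z x) + br z (br x y) = 0)"

end

theory Submission imports Defs begin

lemma opcomp_f1:
  assumes "\<And>a b. f (a + b) = f a + f b" "f 0 = 0"
  shows "opcomp p q (\<lambda>zs. f (A zs)) B xs = f (opcomp p q A B xs)"
  using assms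
proof (induction xs arbitrary: p q A B)
  case Nil thus ?case by simp
next
  case (Cons x ys)
  show ?case using Cons.prems by (simp add: Cons.IH)
qed

lemma opcomp_add1:
  "opcomp p q (\<lambda>zs. A1 zs + A2 zs) B xs = opcomp p q A1 B xs + opcomp p q A2 B xs"
proof (induction xs arbitrary: p q A1 A2 B)
  case Nil thus ?case by simp
next
  case (Cons x ys)
  show ?case using Cons.IH by (simp add: algebra_simps)
qed

lemma opcomp_zero1: "opcomp p q (\<lambda>zs. 0) B xs = 0"
  using opcomp_f1[of "\<lambda>_. 0" p q "\<lambda>_. 0" B xs] by simp

lemma opcomp_neg1: "opcomp p q (\<lambda>zs. - A zs) B xs = - opcomp p q A B xs"
  using opcomp_f1[of "uminus" p q A B xs] by simp

lemma opcomp_diff1: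
  "opcomp p q (\<lambda>zs. A1 zs - A2 zs) B xs = opcomp p q A1 B xs - opcomp p q A2 B xs"
  using opcomp_add1[of p q A1 "\<lambda>zs. - A2 zs" B xs] opcomp_neg1[of p q A2 B xs] by simp

lemma opcomp_sum1:
  "opcomp p q (\<lambda>zs. \<Sum>i\<in>S. F i zs) B xs = (\<Sum>i\<in>S. opcomp p q (F i) B xs)"
proof (induction S rule: infinite_finite_induct)
  case (infinite S) thus ?case by (simp add: opcomp_zero1)
next
  case empty thus ?case by (simp add: opcomp_zero1)
next
  case (insert i S) thus ?case by (simp add: opcomp_add1)
qed

lemma opcomp_cong:
  assumes "length xs = p + q - 1" "p \<ge> 1" "q \<ge> 1"
    "\<And>zs. length zs = p \<Longrightarrow> A zs = A' zs" "\<And>zs. length zs = q \<Longrightarrow> B zs = B' zs"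
  shows "opcomp p q A B xs = opcomp p q A' B' xs"
  using assms
proof (induction xs arbitrary: p q A B A' B')
  case Nil thus ?case by simp
next
  case (Cons x ys)
  have e1: "(if q \<le> 1 then A (B [x] # ys) else opcomp p (q - 1) A (\<lambda>zs. B (x # zs)) ys)
      = (if q \<le> 1 then A' (B' [x] # ys) else opcomp p (q - 1) A' (\<lambda>zs. B' (x # zs)) ys)"
  proof (cases "q \<le> 1")
    case True thus ?thesis using Cons.prems by simp
  next
    case False thus ?thesis using Cons.prems by (simp, intro Cons.IH) auto
  qed
  have e2: "(if p \<le> 1 then 0 else opcomp (p - 1) q (\<lambda>zs. A (x # zs)) B ys)
     = (if p \<le> 1 then 0 else opcomp (p - 1) q (\<lambda>zs. A' (x # zs)) B' ys)"
  proof (cases "p \<le> 1")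
    case True thus ?thesis by simp
  next
    case False thus ?thesis using Cons.prems by (simp, intro Cons.IH) auto
  qed
  show ?case using e1 e2 by simp
qed

lemma ml_R: "multilinear_op sc p A \<Longrightarrow> multilinear_op sc (p - 1) (\<lambda>zs. A (x # zs))"
  unfolding multilinear_op_def
  apply clarify
  subgoal for us vs
    apply (drule spec[of _ "x # us"], drule spec[of _ vs]) by auto
  done

lemma ml_slot: "multilinear_op sc p A \<Longrightarrow> length us + 1 + length vs = p
   \<Longrightarrow> Vector_Spaces.linear sc sc (\<lambda>x. A (us @ x # vs))"
  unfolding multilinear_op_def by blast

context
  fixes sc :: "'a::field \<Rightarrow> 'v::ab_group_add \<Rightarrow> 'v"
  assumes VS: "vector_space sc"
begin

interpretation vs: vector_space sc by (rule VS)

lemma lin_iff: "Vector_Spaces.linear sc sc f \<longleftrightarrow>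
   (\<forall>x y. f (x + y) = f x + f y) \<and> (\<forall>c x. f (sc c x) = sc c (f x))"
  by (simp add: Vector_Spaces.linear_iff VS)

lemma ml_add0: "multilinear_op sc p A \<Longrightarrow> length vs + 1 = p \<Longrightarrow> A ((a + b) # vs) = A (a # vs) + A (b # vs)"
  using ml_slot[of sc p A "[]" vs] by (simp add: lin_iff)

lemma ml_scale0: "multilinear_op sc p A \<Longrightarrow> length vs + 1 = p \<Longrightarrow> A (sc c a # vs) = sc c (A (a # vs))"
  using ml_slot[of sc p A "[]" vs] by (simp add: lin_iff)

lemma opcomp_add2:
  assumes "multilinear_op sc p A" "length xs = p + q - 1" "p \<ge> 1" "q \<ge> 1"
  shows "opcomp p q A (\<lambda>zs. B1 zs + B2 zs) xs = opcomp p q A B1 xs + opcomp p q A B2 xs"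
  using assms
proof (induction xs arbitrary: p q A B1 B2)
  case Nil thus ?case by simp
next
  case (Cons x ys)
  have e1: "(if q \<le> 1 then A ((B1 [x] + B2 [x]) # ys) else opcomp p (q - 1) A (\<lambda>zs. B1 (x # zs) + B2 (x # zs)) ys)
      = (if q \<le> 1 then A (B1 [x] # ys) else opcomp p (q - 1) A (\<lambda>zs. B1 (x # zs)) ys)
       + (if q \<le> 1 then A (B2 [x] # ys) else opcomp p (q - 1) A (\<lambda>zs. B2 (x # zs)) ys)"
  proof (cases "q \<le> 1")
    case True thus ?thesis using Cons.prems by (simp add: ml_add0)
  next
    case False thus ?thesis using Cons.prems by (simp add: Cons.IH)
  qed
  have e2: "(if p \<le> 1 then 0 else opcomp (p - 1) q (\<lambda>zs. A (x # zs)) (\<lambda>zs. B1 zs + B2 zs) ys)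
     = (if p \<le> 1 then 0 else opcomp (p - 1) q (\<lambda>zs. A (x # zs)) B1 ys)
      + (if p \<le> 1 then 0 else opcomp (p - 1) q (\<lambda>zs. A (x # zs)) B2 ys)"
  proof (cases "p \<le> 1")
    case True thus ?thesis by simp
  next
    case False thus ?thesis using Cons.prems by (simp, intro Cons.IH) (auto intro: ml_R[simplified])
  qed
  show ?case using e1 e2 by (simp add: algebra_simps)
qed

lemma opcomp_scale2:
  assumes "multilinear_op sc p A" "length xs = p + q - 1" "p \<ge> 1" "q \<ge> 1"
  shows "opcomp p q A (\<lambda>zs. sc c (B zs)) xs = sc c (opcomp p q A B xs)"
  using assms
proof (induction xs arbitrary: p q A B)
  case Nil thus ?case by simp
next
  case (Cons x ys)
  have e1: "(if q \<le> 1 then A (sc c (B [x]) # ys) else opcomp p (q - 1) A (\<lambda>zs. sc c (B (x # zs))) ys)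
      = sc c (if q \<le> 1 then A (B [x] # ys) else opcomp p (q - 1) A (\<lambda>zs. B (x # zs)) ys)"
  proof (cases "q \<le> 1")
    case True thus ?thesis using Cons.prems by (simp add: ml_scale0)
  next
    case False thus ?thesis using Cons.prems by (simp add: Cons.IH)
  qed
  have e2: "(if p \<le> 1 then 0 else opcomp (p - 1) q (\<lambda>zs. A (x # zs)) (\<lambda>zs. sc c (B zs)) ys)
     = sc c (if p \<le> 1 then 0 else opcomp (p - 1) q (\<lambda>zs. A (x # zs)) B ys)"
  proof (cases "p \<le> 1")
    case True thus ?thesis by simp
  next
    case False thus ?thesis using Cons.prems by (simp, intro Cons.IH) (auto intro: ml_R[simplified])
  qed
  show ?case using e1 e2 by (simp add: vs.scale_right_distrib)
qed

lemma opcomp_zero2: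
  assumes "multilinear_op sc p A" "length xs = p + q - 1" "p \<ge> 1" "q \<ge> 1"
  shows "opcomp p q A (\<lambda>zs. 0) xs = 0"
  using opcomp_scale2[OF assms, of 0 "\<lambda>_. 0"] by simp

lemma opcomp_diff2:
  assumes "multilinear_op sc p A" "length xs = p + q - 1" "p \<ge> 1" "q \<ge> 1"
  shows "opcomp p q A (\<lambda>zs. B1 zs - B2 zs) xs = opcomp p q A B1 xs - opcomp p q A B2 xs"
proof -
  have h: "(\<lambda>zs. B1 zs - B2 zs) = (\<lambda>zs. B1 zs + sc (-1) (B2 zs))"
    by (simp add: vs.scale_minus_left)
  show ?thesis
    unfolding h opcomp_add2[OF assms] opcomp_scale2[OF assms] by (simp add: vs.scale_minus_left)
qed

lemma opcomp_sum2:
  assumes "multilinear_op sc p A" "length xs = p + q - 1" "p \<ge> 1" "q \<ge> 1"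
  shows "opcomp p q A (\<lambda>zs. \<Sum>i\<in>S. F i zs) xs = (\<Sum>i\<in>S. opcomp p q A (F i) xs)"
proof (induction S rule: infinite_finite_induct)
  case (infinite S) thus ?case by (simp add: opcomp_zero2[OF assms])
next
  case empty thus ?case by (simp add: opcomp_zero2[OF assms])
next
  case (insert i S) thus ?case by (simp add: opcomp_add2[OF assms])
qed


lemma ml_RS: "multilinear_op sc (Suc p) A \<Longrightarrow> multilinear_op sc p (\<lambda>zs. A (x # zs))"
  using ml_R[of sc "Suc p" A x] by simp

definition asc where
  "asc p q s A B C xs = opcomp (p+q-1) s (opcomp p q A B) C xs - opcomp p (q+s-1) A (opcomp q s B C) xs"

lemma key:
  assumes mA: "multilinear_op sc p A" and mB: "multilinear_op sc q B" and mC: "multilinear_op sc s C"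
    and p: "p \<ge> 1" and q: "q \<ge> 1" and s: "s \<ge> 1" and len: "length (x # ys) = p + q + s - 2"
  shows "asc p q s A B C (x # ys) =
     (if s \<ge> 2 then asc p q (s-1) A B (\<lambda>zs. C (x # zs)) ys
      else if p \<ge> 2 then opcomp (p-1) q (\<lambda>zs. A (C [x] # zs)) B ys else 0)
   + (if q \<ge> 2 then asc p (q-1) s A (\<lambda>zs. B (x # zs)) C ys
      else if p \<ge> 2 then opcomp (p-1) s (\<lambda>zs. A (B [x] # zs)) C ys else 0)
   + (if p \<ge> 2 then asc (p-1) q s (\<lambda>zs. A (x # zs)) B C ys else 0)"
proof -
  have P: "p = 1 \<or> (\<exists>p0. p = Suc (Suc p0))" using p by presburger
  have Q: "q = 1 \<or> (\<exists>p0. q = Suc (Suc p0))" using q by presburger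
  have S: "s = 1 \<or> (\<exists>p0. s = Suc (Suc p0))" using s by presburger
  show ?thesis
    using P Q S mA mB mC len
    apply (elim disjE exE)
    apply (simp_all add: asc_def opcomp_add1 opcomp_add2 ml_RS)
    done
qed

lemma prelie:
  assumes "multilinear_op sc p A" "multilinear_op sc q B" "multilinear_op sc s C"
    "p \<ge> 1" "q \<ge> 1" "s \<ge> 1" "length xs = p + q + s - 2"
  shows "asc p q s A B C xs = asc p s q A C B xs"
  using assms
proof (induction xs arbitrary: p q s A B C)
  case Nil thus ?case by simp
next
  case (Cons x ys)
  note mA = Cons.prems(1) and mB = Cons.prems(2) and mC = Cons.prems(3)
  have k1: "asc p q s A B C (x # ys) =
     (if s \<ge> 2 then asc p q (s-1) A B (\<lambda>zs. C (x # zs)) ys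
      else if p \<ge> 2 then opcomp (p-1) q (\<lambda>zs. A (C [x] # zs)) B ys else 0)
   + (if q \<ge> 2 then asc p (q-1) s A (\<lambda>zs. B (x # zs)) C ys
      else if p \<ge> 2 then opcomp (p-1) s (\<lambda>zs. A (B [x] # zs)) C ys else 0)
   + (if p \<ge> 2 then asc (p-1) q s (\<lambda>zs. A (x # zs)) B C ys else 0)"
    by (rule key) (use Cons.prems in auto)
  have k2: "asc p s q A C B (x # ys) =
     (if q \<ge> 2 then asc p s (q-1) A C (\<lambda>zs. B (x # zs)) ys
      else if p \<ge> 2 then opcomp (p-1) s (\<lambda>zs. A (B [x] # zs)) C ys else 0)
   + (if s \<ge> 2 then asc p (s-1) q A (\<lambda>zs. C (x # zs)) B ys
      else if p \<ge> 2 then opcomp (p-1) q (\<lambda>zs. A (C [x] # zs)) B ys else 0)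
   + (if p \<ge> 2 then asc (p-1) s q (\<lambda>zs. A (x # zs)) C B ys else 0)"
    by (rule key) (use Cons.prems in auto)
  have i1: "asc p q (s-1) A B (\<lambda>zs. C (x # zs)) ys = asc p (s-1) q A (\<lambda>zs. C (x # zs)) B ys"
    if "s \<ge> 2"
    by (rule Cons.IH) (use Cons.prems that in \<open>auto intro: ml_R[simplified]\<close>)
  have i2: "asc p (q-1) s A (\<lambda>zs. B (x # zs)) C ys = asc p s (q-1) A C (\<lambda>zs. B (x # zs)) ys"
    if "q \<ge> 2"
    by (rule Cons.IH) (use Cons.prems that in \<open>auto intro: ml_R[simplified]\<close>)
  have i3: "asc (p-1) q s (\<lambda>zs. A (x # zs)) B C ys = asc (p-1) s q (\<lambda>zs. A (x # zs)) C B ys"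
    if "p \<ge> 2"
    by (rule Cons.IH) (use Cons.prems that in \<open>auto intro: ml_R[simplified]\<close>)
  show ?case
    unfolding k1 k2
    by (cases "s \<ge> 2"; cases "q \<ge> 2"; cases "p \<ge> 2") (simp_all add: i1[simplified] i2[simplified] i3[simplified] add_ac)
qed

lemma lin_addf: "Vector_Spaces.linear sc sc f \<Longrightarrow> Vector_Spaces.linear sc sc g
   \<Longrightarrow> Vector_Spaces.linear sc sc (\<lambda>x. f x + g x)"
  by (simp add: lin_iff vs.scale_right_distrib)

lemma lin_zero: "Vector_Spaces.linear sc sc (\<lambda>x. 0)"
  by (simp add: lin_iff)

lemma comp_lin_B:
  assumes mA: "multilinear_op sc p A" and mB: "multilinear_op sc q B" and "p \<ge> 1" "q \<ge> 2"
    "length vs = p + q - 2"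
  shows "Vector_Spaces.linear sc sc (\<lambda>x. opcomp p (q-1) A (\<lambda>zs. B (x # zs)) vs)"
  unfolding lin_iff
proof (intro conjI allI)
  fix x y
  have "opcomp p (q-1) A (\<lambda>zs. B ((x + y) # zs)) vs = opcomp p (q-1) A (\<lambda>zs. B (x # zs) + B (y # zs)) vs"
    by (rule opcomp_cong) (use assms in \<open>auto simp: ml_add0[OF mB]\<close>)
  also have "\<dots> = opcomp p (q-1) A (\<lambda>zs. B (x # zs)) vs + opcomp p (q-1) A (\<lambda>zs. B (y # zs)) vs"
    by (rule opcomp_add2) (use assms in auto)
  finally show "opcomp p (q-1) A (\<lambda>zs. B ((x + y) # zs)) vs = opcomp p (q-1) A (\<lambda>zs. B (x # zs)) vs + opcomp p (q-1) A (\<lambda>zs. B (y # zs)) vs" .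
next
  fix c x
  have "opcomp p (q-1) A (\<lambda>zs. B (sc c x # zs)) vs = opcomp p (q-1) A (\<lambda>zs. sc c (B (x # zs))) vs"
    by (rule opcomp_cong) (use assms in \<open>auto simp: ml_scale0[OF mB]\<close>)
  also have "\<dots> = sc c (opcomp p (q-1) A (\<lambda>zs. B (x # zs)) vs)"
    by (rule opcomp_scale2) (use assms in auto)
  finally show "opcomp p (q-1) A (\<lambda>zs. B (sc c x # zs)) vs = sc c (opcomp p (q-1) A (\<lambda>zs. B (x # zs)) vs)" .
qed

lemma comp_lin_A:
  assumes mA: "multilinear_op sc p A" and "p \<ge> 2" "q \<ge> 1"
    "length vs = p + q - 2"
  shows "Vector_Spaces.linear sc sc (\<lambda>x. opcomp (p-1) q (\<lambda>zs. A (x # zs)) B vs)"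
  unfolding lin_iff
proof (intro conjI allI)
  fix x y
  have "opcomp (p-1) q (\<lambda>zs. A ((x + y) # zs)) B vs = opcomp (p-1) q (\<lambda>zs. A (x # zs) + A (y # zs)) B vs"
    by (rule opcomp_cong) (use assms in \<open>auto simp: ml_add0[OF mA]\<close>)
  also have "\<dots> = opcomp (p-1) q (\<lambda>zs. A (x # zs)) B vs + opcomp (p-1) q (\<lambda>zs. A (y # zs)) B vs"
    by (rule opcomp_add1)
  finally show "opcomp (p-1) q (\<lambda>zs. A ((x + y) # zs)) B vs = opcomp (p-1) q (\<lambda>zs. A (x # zs)) B vs + opcomp (p-1) q (\<lambda>zs. A (y # zs)) B vs" .
next
  fix c x
  have "opcomp (p-1) q (\<lambda>zs. A (sc c x # zs)) B vs = opcomp (p-1) q (\<lambda>zs. sc c (A (x # zs))) B vs"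
    by (rule opcomp_cong) (use assms in \<open>auto simp: ml_scale0[OF mA]\<close>)
  also have "\<dots> = sc c (opcomp (p-1) q (\<lambda>zs. A (x # zs)) B vs)"
    by (rule opcomp_f1) (auto simp: vs.scale_right_distrib)
  finally show "opcomp (p-1) q (\<lambda>zs. A (sc c x # zs)) B vs = sc c (opcomp (p-1) q (\<lambda>zs. A (x # zs)) B vs)" .
qed

lemma comp_lin_base:
  assumes mA: "multilinear_op sc p A" and mB: "multilinear_op sc 1 B" and "length vs + 1 = p"
  shows "Vector_Spaces.linear sc sc (\<lambda>x. A (B [x] # vs))"
  unfolding lin_iff using assms
  by (simp add: ml_add0[OF mB, of "[]", simplified] ml_scale0[OF mB, of "[]", simplified]
       ml_add0[OF mA] ml_scale0[OF mA])

lemma opcomp_ml_aux: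
  assumes "multilinear_op sc p A" "multilinear_op sc q B" "p \<ge> 1" "q \<ge> 1"
    "length us + 1 + length vs = p + q - 1"
  shows "Vector_Spaces.linear sc sc (\<lambda>x. opcomp p q A B (us @ x # vs))"
  using assms
proof (induction us arbitrary: p q A B)
  case Nil
  have l1: "Vector_Spaces.linear sc sc (\<lambda>x. if q \<le> 1 then A (B [x] # vs) else opcomp p (q - 1) A (\<lambda>zs. B (x # zs)) vs)"
  proof (cases "q \<le> 1")
    case True thus ?thesis using Nil.prems by (simp add: comp_lin_base)
  next
    case False thus ?thesis using Nil.prems comp_lin_B[of p A q B vs] by simp
  qed
  have l2: "Vector_Spaces.linear sc sc (\<lambda>x. if p \<le> 1 then 0 else opcomp (p - 1) q (\<lambda>zs. A (x # zs)) B vs)"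
  proof (cases "p \<le> 1")
    case True thus ?thesis using Nil.prems by (simp add: lin_zero)
  next
    case False thus ?thesis using Nil.prems comp_lin_A[of p A q vs B] by simp
  qed
  show ?case using lin_addf[OF l1 l2] by simp
next
  case (Cons u us)
  have l1: "Vector_Spaces.linear sc sc (\<lambda>x. if q \<le> 1 then A (B [u] # us @ x # vs) else opcomp p (q - 1) A (\<lambda>zs. B (u # zs)) (us @ x # vs))"
  proof (cases "q \<le> 1")
    case True thus ?thesis using Cons.prems ml_slot[OF Cons.prems(1), of "B [u] # us" vs] by simp
  next
    case False thus ?thesis using Cons.prems by (simp, intro Cons.IH) (auto intro: ml_R[simplified])
  qed
  have l2: "Vector_Spaces.linear sc sc (\<lambda>x. if p \<le> 1 then 0 else opcomp (p - 1) q (\<lambda>zs. A (u # zs)) B (us @ x # vs))"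
  proof (cases "p \<le> 1")
    case True thus ?thesis using Cons.prems by (simp add: lin_zero)
  next
    case False thus ?thesis using Cons.prems by (simp, intro Cons.IH) (auto intro: ml_R[simplified])
  qed
  show ?case using lin_addf[OF l1 l2] by simp
qed

lemma opcomp_ml:
  assumes "multilinear_op sc p A" "multilinear_op sc q B" "p \<ge> 1" "q \<ge> 1"
  shows "multilinear_op sc (p + q - 1) (opcomp p q A B)"
  unfolding multilinear_op_def using opcomp_ml_aux[OF assms] by blast

definition Tset :: "nat \<Rightarrow> (nat \<times> nat \<times> nat) set" where
  "Tset r = {(p, q, s). 1 \<le> p \<and> 1 \<le> q \<and> 1 \<le> s \<and> p + q + s = r + 2}"

lemma U0m_D:
  assumes "A \<in> U0m sc"
  shows "A 0 = (\<lambda>_. 0)" "\<And>p xs. length xs \<noteq> p \<Longrightarrow> A p xs = 0"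
    "\<And>p. multilinear_op sc p (A p)" "finite {p. A p \<noteq> (\<lambda>_. 0)}"
  using assms unfolding U0m_def by auto

lemma circ_eq: "length xs = r \<Longrightarrow> r \<ge> 1 \<Longrightarrow>
  circ A B r xs = (\<Sum>p\<in>{1..r}. opcomp p (r + 1 - p) (A p) (B (r + 1 - p)) xs)"
  unfolding circ_def by simp

lemma CL1:
  assumes "length xs = r" "r \<ge> 1"
  shows "circ (circ A B) C r xs =
    (\<Sum>(p,q,s)\<in>Tset r. opcomp (p + q - 1) s (opcomp p q (A p) (B q)) (C s) xs)"
proof -
  have "circ (circ A B) C r xs = (\<Sum>k\<in>{1..r}. opcomp k (r + 1 - k) (circ A B k) (C (r + 1 - k)) xs)"
    using assms by (rule circ_eq)
  also have "\<dots> = (\<Sum>k\<in>{1..r}. opcomp k (r + 1 - k)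
       (\<lambda>ys. \<Sum>p\<in>{1..k}. opcomp p (k + 1 - p) (A p) (B (k + 1 - p)) ys) (C (r + 1 - k)) xs)"
    by (rule sum.cong[OF refl], rule opcomp_cong) (use assms in \<open>auto simp: circ_eq\<close>)
  also have "\<dots> = (\<Sum>k\<in>{1..r}. \<Sum>p\<in>{1..k}. opcomp k (r + 1 - k)
       (opcomp p (k + 1 - p) (A p) (B (k + 1 - p))) (C (r + 1 - k)) xs)"
    by (simp add: opcomp_sum1)
  also have "\<dots> = (\<Sum>(k,p)\<in>(SIGMA k:{1..r}. {1..k}). opcomp k (r + 1 - k)
       (opcomp p (k + 1 - p) (A p) (B (k + 1 - p))) (C (r + 1 - k)) xs)"
    by (rule sum.Sigma) auto
  also have "\<dots> = (\<Sum>(p,q,s)\<in>Tset r. opcomp (p + q - 1) s (opcomp p q (A p) (B q)) (C s) xs)"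
    by (rule sum.reindex_bij_witness[where i = "\<lambda>(p,q,s). (p + q - 1, p)"
          and j = "\<lambda>(k,p). (p, k + 1 - p, r + 1 - k)"])
       (auto simp: Tset_def)
  finally show ?thesis .
qed

lemma CL2:
  assumes "length xs = r" "r \<ge> 1" "\<And>p. multilinear_op sc p (A p)"
  shows "circ A (circ B C) r xs =
    (\<Sum>(p,q,s)\<in>Tset r. opcomp p (q + s - 1) (A p) (opcomp q s (B q) (C s)) xs)"
proof -
  have "circ A (circ B C) r xs = (\<Sum>p\<in>{1..r}. opcomp p (r + 1 - p) (A p) (circ B C (r + 1 - p)) xs)"
    using assms by (intro circ_eq)
  also have "\<dots> = (\<Sum>p\<in>{1..r}. opcomp p (r + 1 - p) (A p)
       (\<lambda>ys. \<Sum>q\<in>{1..r + 1 - p}. opcomp q (r + 1 - p + 1 - q) (B q) (C (r + 1 - p + 1 - q)) ys) xs)"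
    by (rule sum.cong[OF refl], rule opcomp_cong) (use assms in \<open>auto simp: circ_eq\<close>)
  also have "\<dots> = (\<Sum>p\<in>{1..r}. \<Sum>q\<in>{1..r + 1 - p}. opcomp p (r + 1 - p) (A p)
       (opcomp q (r + 1 - p + 1 - q) (B q) (C (r + 1 - p + 1 - q))) xs)"
    by (rule sum.cong[OF refl], rule opcomp_sum2) (use assms in auto)
  also have "\<dots> = (\<Sum>(p,q)\<in>(SIGMA p:{1..r}. {1..r + 1 - p}). opcomp p (r + 1 - p) (A p)
       (opcomp q (r + 1 - p + 1 - q) (B q) (C (r + 1 - p + 1 - q))) xs)"
    by (rule sum.Sigma) auto
  also have "\<dots> = (\<Sum>(p,q,s)\<in>Tset r. opcomp p (q + s - 1) (A p) (opcomp q s (B q) (C s)) xs)"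
    by (rule sum.reindex_bij_witness[where i = "\<lambda>(p,q,s). (p, q)"
          and j = "\<lambda>(p,q). (p, q, r + 2 - p - q)"])
       (auto simp: Tset_def)
  finally show ?thesis .
qed

lemma assoc_sym:
  assumes "A \<in> U0m sc" "B \<in> U0m sc" "C \<in> U0m sc"
  shows "circ (circ A B) C - circ A (circ B C) = circ (circ A C) B - circ A (circ C B)"
proof (intro ext)
  fix r xs
  show "(circ (circ A B) C - circ A (circ B C)) r xs = (circ (circ A C) B - circ A (circ C B)) r xs"
  proof (cases "r = 0 \<or> length xs \<noteq> r")
    case True thus ?thesis by (auto simp: circ_def)
  next
    case False
    hence l: "length xs = r" "r \<ge> 1" by auto
    note mA = U0m_D(3)[OF assms(1)] and mB = U0m_D(3)[OF assms(2)] and mC = U0m_D(3)[OF assms(3)]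
    have "(circ (circ A B) C - circ A (circ B C)) r xs = (\<Sum>(p,q,s)\<in>Tset r. asc p q s (A p) (B q) (C s) xs)"
      by (simp add: CL1[OF l] CL2[OF l mA] asc_def sum_subtractf[symmetric] case_prod_unfold)
    also have "\<dots> = (\<Sum>(p,q,s)\<in>Tset r. asc p q s (A p) (C q) (B s) xs)"
      by (rule sum.reindex_bij_witness[where i = "\<lambda>(p,q,s). (p, s, q)" and j = "\<lambda>(p,q,s). (p, s, q)"])
         (auto simp: Tset_def l add_ac intro: prelie[OF mA mC mB])
    also have "\<dots> = (circ (circ A C) B - circ A (circ C B)) r xs"
      by (simp add: CL1[OF l] CL2[OF l mA] asc_def sum_subtractf[symmetric] case_prod_unfold)
    finally show ?thesis .
  qed
qed

lemma lin_sum: "(\<And>i. i \<in> S \<Longrightarrow> Vector_Spaces.linear sc sc (f i))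
   \<Longrightarrow> Vector_Spaces.linear sc sc (\<lambda>x. \<Sum>i\<in>S. f i x)"
proof (induction S rule: infinite_finite_induct)
  case (infinite S) thus ?case by (simp add: lin_zero)
next
  case empty thus ?case by (simp add: lin_zero)
next
  case (insert i S) thus ?case by (simp add: lin_addf)
qed

lemma lin_scalef: "Vector_Spaces.linear sc sc f \<Longrightarrow> Vector_Spaces.linear sc sc (\<lambda>x. sc c (f x))"
  by (simp add: lin_iff vs.scale_right_distrib mult.commute)

lemma U0m_zero: "0 \<in> U0m sc"
  by (simp add: U0m_def multilinear_op_def zero_fun_def lin_zero)

lemma U0m_add: "A \<in> U0m sc \<Longrightarrow> B \<in> U0m sc \<Longrightarrow> A + B \<in> U0m sc"
proof -
  assume a: "A \<in> U0m sc" "B \<in> U0m sc"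
  have "{p. (A + B) p \<noteq> (\<lambda>_. 0)} \<subseteq> {p. A p \<noteq> (\<lambda>_. 0)} \<union> {p. B p \<noteq> (\<lambda>_. 0)}"
    by (auto simp: plus_fun_def)
  hence "finite {p. (A + B) p \<noteq> (\<lambda>_. 0)}"
    using U0m_D(4)[OF a(1)] U0m_D(4)[OF a(2)] by (meson finite_Un finite_subset)
  moreover have "multilinear_op sc p ((A + B) p)" for p
    using U0m_D(3)[OF a(1), of p] U0m_D(3)[OF a(2), of p]
    unfolding multilinear_op_def plus_fun_def by (auto intro: lin_addf)
  ultimately show ?thesis using a unfolding U0m_def by (auto simp: plus_fun_def)
qed

lemma U0m_scale: "A \<in> U0m sc \<Longrightarrow> scale_U0m sc c A \<in> U0m sc"
proof -
  assume a: "A \<in> U0m sc"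
  have "{p. scale_U0m sc c A p \<noteq> (\<lambda>_. 0)} \<subseteq> {p. A p \<noteq> (\<lambda>_. 0)}"
    by (auto simp: scale_U0m_def)
  hence "finite {p. scale_U0m sc c A p \<noteq> (\<lambda>_. 0)}"
    using U0m_D(4)[OF a] by (meson finite_subset)
  moreover have "multilinear_op sc p (scale_U0m sc c A p)" for p
    using U0m_D(3)[OF a, of p]
    unfolding multilinear_op_def scale_U0m_def by (auto intro: lin_scalef)
  ultimately show ?thesis using a unfolding U0m_def by (auto simp: scale_U0m_def)
qed

lemma minus_as_scale: "A - B = A + scale_U0m sc (-1) B"
  by (auto simp: scale_U0m_def fun_eq_iff vs.scale_minus_left)

lemma U0m_diff: "A \<in> U0m sc \<Longrightarrow> B \<in> U0m sc \<Longrightarrow> A - B \<in> U0m sc"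
  by (simp add: minus_as_scale U0m_add U0m_scale)

lemma circ_U0m:
  assumes a: "A \<in> U0m sc" and b: "B \<in> U0m sc"
  shows "circ A B \<in> U0m sc"
proof -
  note mA = U0m_D(3)[OF a] and mB = U0m_D(3)[OF b]
  obtain NA where NA: "\<And>p. A p \<noteq> (\<lambda>_. 0) \<Longrightarrow> p \<le> NA"
    using U0m_D(4)[OF a] unfolding finite_nat_set_iff_bounded_le by auto
  obtain NB where NB: "\<And>p. B p \<noteq> (\<lambda>_. 0) \<Longrightarrow> p \<le> NB"
    using U0m_D(4)[OF b] unfolding finite_nat_set_iff_bounded_le by auto
  have z: "circ A B r = (\<lambda>_. 0)" if r: "r > NA + NB" for r
  proof
    fix xs
    show "circ A B r xs = 0"
    proof (cases "r = 0 \<or> length xs \<noteq> r")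
      case True thus ?thesis by (auto simp: circ_def)
    next
      case False
      hence l: "length xs = r" "r \<ge> 1" by auto
      have "opcomp p (r + 1 - p) (A p) (B (r + 1 - p)) xs = 0" if p: "p \<in> {1..r}" for p
      proof (cases "A p = (\<lambda>_. 0)")
        case True thus ?thesis by (simp add: opcomp_zero1)
      next
        case False
        hence "p \<le> NA" by (rule NA)
        hence "B (r + 1 - p) = (\<lambda>_. 0)" using NB r by fastforce
        thus ?thesis using p l by (simp, intro opcomp_zero2[OF mA]) auto
      qed
      thus ?thesis by (simp add: circ_eq[OF l])
    qed
  qed
  have "{r. circ A B r \<noteq> (\<lambda>_. 0)} \<subseteq> {..NA + NB}"
    using z by (auto simp: not_less[symmetric])
  hence fin: "finite {r. circ A B r \<noteq> (\<lambda>_. 0)}" by (rule finite_subset) simp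
  have ml: "multilinear_op sc r (circ A B r)" for r
    unfolding multilinear_op_def
  proof (intro allI impI)
    fix us vs :: "'v list"
    assume l: "length us + 1 + length vs = r"
    have "Vector_Spaces.linear sc sc (\<lambda>x. \<Sum>p\<in>{1..r}. opcomp p (r + 1 - p) (A p) (B (r + 1 - p)) (us @ x # vs))"
      by (rule lin_sum, rule opcomp_ml_aux) (use l mA mB in auto)
    moreover have "circ A B r (us @ x # vs) = (\<Sum>p\<in>{1..r}. opcomp p (r + 1 - p) (A p) (B (r + 1 - p)) (us @ x # vs))" for x
      by (rule circ_eq) (use l in auto)
    ultimately show "Vector_Spaces.linear sc sc (\<lambda>x. circ A B r (us @ x # vs))" by simp
  qed
  show ?thesis unfolding U0m_def using fin ml by (auto simp: circ_def fun_eq_iff)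
qed

lemma circ_ptw:
  assumes "\<And>r xs p. length xs = r \<Longrightarrow> p \<in> {1..r} \<Longrightarrow>
     opcomp p (r + 1 - p) (A p) (B (r + 1 - p)) xs = g (opcomp p (r + 1 - p) (A1 p) (B1 (r + 1 - p)) xs) (opcomp p (r + 1 - p) (A2 p) (B2 (r + 1 - p)) xs)"
    and "\<And>(S::nat set) f h. finite S \<Longrightarrow> (\<Sum>i\<in>S. g (f i) (h i)) = g (sum f S) (sum h S)"
    and "g 0 0 = 0"
  shows "circ A B r xs = g (circ A1 B1 r xs) (circ A2 B2 r xs)"
proof (cases "r = 0 \<or> length xs \<noteq> r")
  case True thus ?thesis using assms(3) by (auto simp: circ_def)
next
  case False
  hence l: "length xs = r" "r \<ge> 1" by auto
  have "circ A B r xs = (\<Sum>p\<in>{1..r}. g (opcomp p (r + 1 - p) (A1 p) (B1 (r + 1 - p)) xs) (opcomp p (r + 1 - p) (A2 p) (B2 (r + 1 - p)) xs))"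
    unfolding circ_eq[OF l] by (rule sum.cong[OF refl], rule assms(1)[OF l(1)])
  also have "\<dots> = g (circ A1 B1 r xs) (circ A2 B2 r xs)"
    unfolding circ_eq[OF l]
    using assms(2)[of "{1..r}" "\<lambda>p. opcomp p (r + 1 - p) (A1 p) (B1 (r + 1 - p)) xs"
       "\<lambda>p. opcomp p (r + 1 - p) (A2 p) (B2 (r + 1 - p)) xs"] by simp
  finally show ?thesis .
qed

lemma circ_ptw1:
  assumes "\<And>r xs p. length xs = r \<Longrightarrow> p \<in> {1..r} \<Longrightarrow>
     opcomp p (r + 1 - p) (A p) (B (r + 1 - p)) xs = sc c (opcomp p (r + 1 - p) (A1 p) (B1 (r + 1 - p)) xs)"
  shows "circ A B r xs = sc c (circ A1 B1 r xs)"
  using circ_ptw[of A B "\<lambda>a b. sc c a" A1 B1 A1 B1 r xs] assms by (simp add: vs.scale_sum_right)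

lemma circ_add1: "circ (A1 + A2) B = circ A1 B + circ A2 B"
  by (auto simp: fun_eq_iff intro!: circ_ptw[where g = "(+)"] sum.distrib)
     (simp add: plus_fun_def opcomp_add1)

lemma circ_diff1: "circ (A1 - A2) B = circ A1 B - circ A2 B"
  by (auto simp: fun_eq_iff intro!: circ_ptw[where g = "(-)"] sum_subtractf)
     (simp add: fun_diff_def opcomp_diff1)

lemma circ_add2:
  assumes a: "A \<in> U0m sc" shows "circ A (B1 + B2) = circ A B1 + circ A B2"
  by (auto simp: fun_eq_iff intro!: circ_ptw[where g = "(+)"] sum.distrib)
     (simp add: plus_fun_def opcomp_add2[OF U0m_D(3)[OF a]])

lemma circ_diff2:
  assumes a: "A \<in> U0m sc" shows "circ A (B1 - B2) = circ A B1 - circ A B2"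
  by (auto simp: fun_eq_iff intro!: circ_ptw[where g = "(-)"] sum_subtractf)
     (simp add: fun_diff_def opcomp_diff2[OF U0m_D(3)[OF a]])

lemma circ_scale1: "circ (scale_U0m sc c A) B = scale_U0m sc c (circ A B)"
  by (auto simp: fun_eq_iff scale_U0m_def[of sc c "circ A B"] intro!: circ_ptw1)
     (simp add: scale_U0m_def opcomp_f1[where f = "sc c"] vs.scale_right_distrib)

lemma circ_scale2:
  assumes a: "A \<in> U0m sc" shows "circ A (scale_U0m sc c B) = scale_U0m sc c (circ A B)"
  by (auto simp: fun_eq_iff scale_U0m_def[of sc c "circ A B"] intro!: circ_ptw1)
     (simp add: scale_U0m_def opcomp_scale2[OF U0m_D(3)[OF a]])

lemma scale_diff: "scale_U0m sc c (F - G) = scale_U0m sc c F - scale_U0m sc c G"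
  by (auto simp: fun_eq_iff scale_U0m_def vs.scale_right_diff_distrib)

lemma jacobi:
  assumes x: "X \<in> U0m sc" and y: "Y \<in> U0m sc" and z: "Z \<in> U0m sc"
  shows "bracket X (bracket Y Z) + bracket Y (bracket Z X) + bracket Z (bracket X Y) = 0"
proof -
  have cc: "circ U V \<in> U0m sc" if "U \<in> U0m sc" "V \<in> U0m sc" for U V using that by (rule circ_U0m)
  note a1 = assoc_sym[OF x y z] and a2 = assoc_sym[OF y z x] and a3 = assoc_sym[OF z x y]
  have "bracket X (bracket Y Z) + bracket Y (bracket Z X) + bracket Z (bracket X Y)
    = (circ X (circ Y Z) - circ X (circ Z Y) - circ (circ Y Z) X + circ (circ Z Y) X)
    + (circ Y (circ Z X) - circ Y (circ X Z) - circ (circ Z X) Y + circ (circ X Z) Y)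
    + (circ Z (circ X Y) - circ Z (circ Y X) - circ (circ X Y) Z + circ (circ Y X) Z)"
    unfolding bracket_def
    by (simp add: circ_diff1 circ_diff2 x y z cc algebra_simps)
  also have "\<dots> = - ((circ (circ X Y) Z - circ X (circ Y Z) - (circ (circ X Z) Y - circ X (circ Z Y)))
     + (circ (circ Y Z) X - circ Y (circ Z X) - (circ (circ Y X) Z - circ Y (circ X Z)))
     + (circ (circ Z X) Y - circ Z (circ X Y) - (circ (circ Z Y) X - circ Z (circ Y X))))"
    by (simp add: algebra_simps)
  also have "\<dots> = 0" using a1 a2 a3 by simp
  finally show ?thesis .
qed
end
theorem corollary2p2:
  fixes scale :: "'a::field_char_0 \<Rightarrow> 'v::ab_group_add \<Rightarrow> 'v"
  assumes "vector_space scale"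
  shows "is_lie_algebra (scale_U0m scale) (U0m scale) bracket"
proof -
  note V = assms
  have cl: "bracket x y \<in> U0m scale" if "x \<in> U0m scale" "y \<in> U0m scale" for x y
    unfolding bracket_def using that by (intro U0m_diff[OF V] circ_U0m[OF V])
  show ?thesis
    unfolding is_lie_algebra_def
  proof (intro conjI ballI allI)
    show "0 \<in> U0m scale" by (rule U0m_zero[OF V])
  next
    fix x y assume "x \<in> U0m scale" "y \<in> U0m scale"
    thus "x + y \<in> U0m scale" by (rule U0m_add[OF V])
  next
    fix c x assume "x \<in> U0m scale"
    thus "scale_U0m scale c x \<in> U0m scale" by (rule U0m_scale[OF V])
  next
    fix x y assume "x \<in> U0m scale" "y \<in> U0m scale"
    thus "bracket x y \<in> U0m scale" by (rule cl)
  next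
    fix x y z assume a: "x \<in> U0m scale" "y \<in> U0m scale" "z \<in> U0m scale"
    show "bracket (x + y) z = bracket x z + bracket y z"
      unfolding bracket_def using a by (simp add: circ_add1[OF V] circ_add2[OF V] algebra_simps)
    show "bracket z (x + y) = bracket z x + bracket z y"
      unfolding bracket_def using a by (simp add: circ_add1[OF V] circ_add2[OF V] algebra_simps)
  next
    fix c x y assume a: "x \<in> U0m scale" "y \<in> U0m scale"
    show "bracket (scale_U0m scale c x) y = scale_U0m scale c (bracket x y)"
      unfolding bracket_def using a by (simp add: circ_scale1[OF V] circ_scale2[OF V] scale_diff[OF V])
    show "bracket x (scale_U0m scale c y) = scale_U0m scale c (bracket x y)"
      unfolding bracket_def using a by (simp add: circ_scale1[OF V] circ_scale2[OF V] scale_diff[OF V])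
  next
    fix x assume "x \<in> U0m scale"
    show "bracket x x = 0" by (simp add: bracket_def)
  next
    fix x y z assume a: "x \<in> U0m scale" "y \<in> U0m scale" "z \<in> U0m scale"
    show "bracket x (bracket y z) + bracket y (bracket z x) + bracket z (bracket x y) = 0"
      by (rule jacobi[OF V a])
  qed
qed

end
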